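(* Let $n$ be a positive integer and let $F_R(n)$ be the $n\times n$ Fibonacci--Redheffer matrix. If $\lambda_1,\lambda_2,\ldots,\lambda_n$ are the $n$ (not necessarily distinct) eigenvalues of $F_R(n)$, then \[ \det(F_R(n))=\prod_{j=1}^{n}\lambda_j = n!_F\sum_{k=1}^{n}\frac{\mu(k)}{F_k}. \]
   Context: The Fibonacci numbers are $F_1=F_2=1$, $F_n=F_{n-1}+F_{n-2}$ for $n\ge 3$. The Fibonacci--Redheffer matrix $F_R(n)=[F_R(i,j)]_{i,j=1}^n$ is defined by $F_R(i,j)=1$ if $j=1$; $F_R(i,j)=F_i$ if $i\mid j$; and $F_R(i,j)=0$ otherwise (for $i=j=1$ both rules give $1$). The Fibonacci factorial is $n!_F=\prod_{i=1}^n F_i$. $\mu$ denotes the Möbius function: $\mu(1)=1$, $\mu(j)=0$ if $j$ has a repeated prime factor, and $\mu(j)=(-1)^k$ if $j$ is a product of $k$ distinct primes. *)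

theory Defs
  imports "Jordan_Normal_Form.Char_Poly" "HOL-Number_Theory.Fib"
    "HOL-Computational_Algebra.Squarefree"
begin

text \<open>Fibonacci numbers: library fib, with fib 1 = fib 2 = 1.\<close>

definition fib_fact :: "nat \<Rightarrow> nat" where
  "fib_fact n = (\<Prod>i=1..n. fib i)"

definition moebius :: "nat \<Rightarrow> int" where
  "moebius j = (if j = 0 then 0
                else if squarefree j then (-1) ^ card (prime_factors j) else 0)"

text \<open>Fibonacci--Redheffer matrix, 0-based indices: entry (i,j) here is
  entry (i+1,j+1) of the paper.\<close>
definition FR_mat :: "nat \<Rightarrow> 'a :: comm_ring_1 mat" where
  "FR_mat n = mat n n (\<lambda>(i,j). if j = 0 then 1
                           else if Suc i dvd Suc j then of_nat (fib (Suc i)) else 0)"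

end

theory Submission imports Defs begin

lemma moebius_mult_prime:
  assumes p: "prime (p::nat)" and nd: "\<not> p dvd d" and d: "d > 0"
  shows "moebius (p*d) = - moebius d"
proof -
  have cop: "coprime p d" using p nd by (simp add: prime_imp_coprime)
  have sq: "squarefree (p*d) \<longleftrightarrow> squarefree d"
    using squarefree_mult_coprime[OF cop] squarefree_prime[OF p] squarefree_mono[of d "p*d"] by auto
  have pf: "prime_factors (p*d) = insert p (prime_factors d)"
    using p d by (simp add: prime_factorization_mult prime_factorization_prime)
  have pn: "p \<notin> prime_factors d" using nd by auto
  have "p > 0" using p prime_gt_0_nat by blast
  then show ?thesis using d pn unfolding moebius_def by (simp add: sq pf)
qed

lemma moebius_sum:
  assumes m: "m > (0::nat)"
  shows "(\<Sum>d\<in>{d. d dvd m}. moebius d) = (if m = 1 then 1 else 0)"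
proof (cases "m = 1")
  case True
  then show ?thesis by (simp add: moebius_def)
next
  case False
  then obtain p where p: "prime p" "p dvd m" using m prime_factor_nat by blast
  have p0: "p > 0" using p prime_gt_0_nat by blast
  define D where "D = {d. d dvd m}"
  define A where "A = {d\<in>D. \<not> p dvd d}"
  define B where "B = {d\<in>D. p dvd d}"
  have fD: "finite D" unfolding D_def using m by simp
  have DAB: "D = A \<union> B" "A \<inter> B = {}" unfolding A_def B_def by auto
  have fA: "finite A" "finite B" using fD DAB by auto
  have img: "(\<lambda>d. p*d) ` A \<subseteq> B"
  proof
    fix x assume "x \<in> (\<lambda>d. p*d) ` A"
    then obtain d where d: "d \<in> A" "x = p*d" by auto
    have "coprime p d" using d p unfolding A_def by (simp add: prime_imp_coprime)
    moreover have "d dvd m" using d unfolding A_def D_def by auto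
    ultimately have "p*d dvd m" using p by (simp add: divides_mult)
    then show "x \<in> B" using d unfolding B_def D_def by auto
  qed
  have rest: "\<forall>x\<in>B - (\<lambda>d. p*d) ` A. moebius x = 0"
  proof
    fix x assume x: "x \<in> B - (\<lambda>d. p*d) ` A"
    then obtain e where e: "x = p*e" unfolding B_def by auto
    have "e dvd m" using x e unfolding B_def D_def by (auto intro: dvd_mult_right)
    then have "p dvd e" using x e unfolding A_def D_def by auto
    then have "p^2 dvd x" using e by (auto simp: power2_eq_square)
    moreover have "\<not> p dvd 1" using p by auto
    ultimately have "\<not> squarefree x" by (rule not_squarefreeI)
    then show "moebius x = 0" unfolding moebius_def by auto
  qed
  have "sum moebius B = sum moebius ((\<lambda>d. p*d) ` A)"
    by (rule sum.mono_neutral_right[OF fA(2) img rest])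
  also have "\<dots> = (\<Sum>d\<in>A. moebius (p*d))"
    using p0 by (subst sum.reindex) (auto simp: inj_on_def)
  also have "\<dots> = (\<Sum>d\<in>A. - moebius d)"
  proof (rule sum.cong[OF refl])
    fix d assume "d \<in> A"
    then have "\<not> p dvd d" "d > 0" using m unfolding A_def D_def by (auto intro: dvd_pos_nat)
    then show "moebius (p*d) = - moebius d" using moebius_mult_prime p by auto
  qed
  finally have "sum moebius B = - sum moebius A" by (simp add: sum_negf)
  then have "sum moebius D = 0" using DAB fA by (simp add: sum.union_disjoint)
  then show ?thesis using False unfolding D_def by simp
qed


lemma divsum:
  assumes a: "a > (0::nat)" and b: "b > 0" "b \<le> n"
  shows "(\<Sum>k<n. if a dvd Suc k \<and> Suc k dvd b then (of_int (moebius (Suc k div a)) :: complex) else 0)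
       = (if a = b then 1 else 0)"
proof (cases "a dvd b")
  case False
  then have "\<And>k. \<not> (a dvd Suc k \<and> Suc k dvd b)" using dvd_trans by blast
  then have "(\<Sum>k<n. if a dvd Suc k \<and> Suc k dvd b then (of_int (moebius (Suc k div a)) :: complex) else 0) = 0" by (intro sum.neutral ballI if_not_P) blast
  then show ?thesis using False by auto
next
  case True
  then obtain m where m: "b = a*m" by auto
  have m0: "m > 0" using m b by (cases m) auto
  have "(\<Sum>k<n. if a dvd Suc k \<and> Suc k dvd b then (of_int (moebius (Suc k div a)) :: complex) else 0)
     = (\<Sum>k\<in>{k\<in>{..<n}. a dvd Suc k \<and> Suc k dvd b}. of_int (moebius (Suc k div a)))"
    by (rule sum.inter_filter[symmetric]) simp
  also have "\<dots> = (\<Sum>e\<in>{e. e dvd m}. of_int (moebius e))"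
  proof (rule sum.reindex_bij_witness[of _ "\<lambda>e. a*e - 1" "\<lambda>k. Suc k div a"])
    fix e assume e: "e \<in> {e. e dvd m}"
    then have e0: "e > 0" using m0 by (auto intro: dvd_pos_nat)
    then have ae: "a*e \<ge> 1" using a by simp
    have "a*e \<le> b" using e m m0 by (auto intro: dvd_imp_le)
    then have lt: "a*e - 1 < n" using ae b by linarith
    have "Suc (a*e - 1) = a*e" using ae by simp
    then show "a*e - 1 \<in> {k \<in> {..<n}. a dvd Suc k \<and> Suc k dvd b}"
      using lt e m by auto
    show "Suc (a*e - 1) div a = e" using ae a by simp
  next
    fix k assume k: "k \<in> {k \<in> {..<n}. a dvd Suc k \<and> Suc k dvd b}"
    then obtain c where c: "Suc k = a*c" by auto
    have "c dvd m" using k c m a by auto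
    then show "Suc k div a \<in> {e. e dvd m}" using c a by simp
    show "a * (Suc k div a) - 1 = k" using c a by simp
    show "of_int (moebius (Suc k div a)) = (of_int (moebius (Suc k div a)) :: complex)" by simp
  qed
  also have "\<dots> = of_int (\<Sum>e\<in>{e. e dvd m}. moebius e)" by simp
  also have "\<dots> = (if m = 1 then 1 else 0)" using moebius_sum[OF m0] by simp
  finally show ?thesis using m a by auto
qed


definition Wm :: "nat \<Rightarrow> complex mat" where
  "Wm n = mat n n (\<lambda>(i,j). if Suc i dvd Suc j
      then of_int (moebius (Suc j div Suc i)) / of_nat (fib (Suc j)) else 0)"

definition xv :: "nat \<Rightarrow> nat \<Rightarrow> complex" where
  "xv n i = (\<Sum>k<n. Wm n $$ (i,k))"

definition Em :: "nat \<Rightarrow> complex mat" where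
  "Em n = mat n n (\<lambda>(i,j). if j = 0 then xv n i else if i = j then 1 else 0)"

lemma fib_Suc_nz: "(of_nat (fib (Suc k)) :: complex) \<noteq> 0"
  using fib_neq_0_nat[of "Suc k"] by simp

lemma WFR: "Wm n * (FR_mat n :: complex mat) = Em n"
proof (rule eq_matI)
  show "dim_row (Wm n * FR_mat n) = dim_row (Em n)" "dim_col (Wm n * FR_mat n) = dim_col (Em n)"
    by (simp_all add: Wm_def Em_def FR_mat_def)
  fix i j assume i: "i < dim_row (Em n)" and j: "j < dim_col (Em n)"
  then have i: "i < n" and j: "j < n" by (auto simp: Em_def)
  have "(Wm n * FR_mat n) $$ (i,j) = (\<Sum>k<n. Wm n $$ (i,k) * FR_mat n $$ (k,j))"
    using i j by (simp add: Wm_def FR_mat_def scalar_prod_def lessThan_atLeast0 ac_simps)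
  also have "\<dots> = Em n $$ (i,j)"
  proof (cases "j = 0")
    case True
    then show ?thesis using i j by (simp add: FR_mat_def Em_def xv_def)
  next
    case False
    have "(\<Sum>k<n. Wm n $$ (i,k) * FR_mat n $$ (k,j))
        = (\<Sum>k<n. if Suc i dvd Suc k \<and> Suc k dvd Suc j then (of_int (moebius (Suc k div Suc i)) :: complex) else 0)"
      using False fib_Suc_nz i j by (intro sum.cong refl) (auto simp: Wm_def FR_mat_def)
    also have "\<dots> = (if Suc i = Suc j then 1 else 0)"
      by (rule divsum) (use j in auto)
    finally show ?thesis using False i j by (simp add: Em_def)
  qed
  finally show "(Wm n * FR_mat n) $$ (i,j) = Em n $$ (i,j)" .
qed

lemma det_Wm: "det (Wm n) = 1 / of_nat (fib_fact n)"
proof -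
  have "det (Wm n) = prod_list (diag_mat (Wm n))"
  proof (rule det_upper_triangular)
    show "upper_triangular (Wm n)" unfolding upper_triangular_def Wm_def
    proof (intro allI impI)
      fix i j assume ij: "j < i" and "i < dim_row (mat n n (\<lambda>(i,j). if Suc i dvd Suc j
      then (of_int (moebius (Suc j div Suc i)) :: complex) / of_nat (fib (Suc j)) else 0))"
      then have "i < n" by simp
      moreover have "\<not> Suc i dvd Suc j" using ij by (auto dest: dvd_imp_le)
      ultimately show "mat n n (\<lambda>(i,j). if Suc i dvd Suc j
      then (of_int (moebius (Suc j div Suc i)) :: complex) / of_nat (fib (Suc j)) else 0) $$ (i, j) = 0"
        using ij by simp
    qed
    show "Wm n \<in> carrier_mat n n" by (simp add: Wm_def)
  qed
  also have "\<dots> = (\<Prod>i=0..<n. 1 / of_nat (fib (Suc i)))"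
    by (simp add: prod_list_diag_prod Wm_def moebius_def)
  also have "\<dots> = 1 / (\<Prod>i=0..<n. of_nat (fib (Suc i)))"
    by (simp add: prod_dividef)
  also have "(\<Prod>i=0..<n. (of_nat (fib (Suc i)) :: complex)) = of_nat (fib_fact n)"
    unfolding fib_fact_def of_nat_prod
    by (rule prod.reindex_bij_witness[of _ "\<lambda>i. i - 1" "Suc"]) auto
  finally show ?thesis .
qed

lemma det_Em: "n \<ge> 1 \<Longrightarrow> det (Em n) = (\<Sum>k=1..n. of_int (moebius k) / of_nat (fib k))"
proof -
  assume n: "n \<ge> 1"
  have "det (Em n) = prod_list (diag_mat (Em n))"
    by (rule det_lower_triangular[of n]) (auto simp: Em_def)
  also have "\<dots> = (\<Prod>i=0..<n. Em n $$ (i,i))" by (simp add: prod_list_diag_prod Em_def)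
  also have "\<dots> = (\<Prod>i\<in>insert 0 {1..<n}. Em n $$ (i,i))"
    using n by (intro prod.cong) auto
  also have "\<dots> = Em n $$ (0,0)" by (subst prod.insert) (auto simp: Em_def)
  also have "\<dots> = xv n 0" using n by (simp add: Em_def)
  also have "\<dots> = (\<Sum>k<n. of_int (moebius (Suc k)) / of_nat (fib (Suc k)))"
    unfolding xv_def by (intro sum.cong refl) (simp add: Wm_def)
  also have "\<dots> = (\<Sum>k=1..n. of_int (moebius k) / of_nat (fib k))"
    by (rule sum.reindex_bij_witness[of _ "\<lambda>i. i - 1" "Suc"]) auto
  finally show ?thesis .
qed


lemma poly_prod_lin0: "poly (\<Prod>a \<leftarrow> ls. [:- a, 1:]) 0 = (-1) ^ length ls * prod_list (ls :: complex list)"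
  by (induction ls) auto

lemma det_char_poly0:
  assumes A: "(A :: complex mat) \<in> carrier_mat n n"
  shows "poly (char_poly A) 0 = (-1)^n * det A"
proof -
  have "char_matrix A 0 = A" using A by (intro eq_matI) (auto simp: char_matrix_def)
  moreover have "- A = (-1) \<cdot>\<^sub>m A" using A by (intro eq_matI) auto
  ultimately show ?thesis using A char_poly_matrix[OF A, of 0] by simp
qed

theorem theorem1:
  fixes n :: nat and lambdas :: "complex list"
  assumes "n \<ge> 1"
    and "length lambdas = n"
    and "char_poly (FR_mat n :: complex mat) = (\<Prod>a \<leftarrow> lambdas. [:- a, 1:])"
  shows "det (FR_mat n :: complex mat) = prod_list lambdas
       \<and> prod_list lambdas =
           of_nat (fib_fact n) * (\<Sum>k=1..n. of_int (moebius k) / of_nat (fib k))"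
proof -
  have C: "(FR_mat n :: complex mat) \<in> carrier_mat n n" by (simp add: FR_mat_def)
  have "fib_fact n > 0" unfolding fib_fact_def by (intro prod_pos) (auto intro: fib_neq_0_nat)
  then have ff: "(of_nat (fib_fact n) :: complex) \<noteq> 0" by simp
  have "(-1)^n * det (FR_mat n :: complex mat) = (-1)^n * prod_list lambdas"
    using det_char_poly0[OF C] assms(2,3) poly_prod_lin0[of lambdas] by simp
  then have 1: "det (FR_mat n :: complex mat) = prod_list lambdas" by simp
  have "det (Wm n) * det (FR_mat n :: complex mat) = det (Em n)"
    using det_mult[OF _ C, of "Wm n"] WFR[of n] by (simp add: Wm_def)
  then have "det (FR_mat n :: complex mat) = of_nat (fib_fact n) * det (Em n)"
    unfolding det_Wm using ff by (simp add: field_simps)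
  then have 2: "det (FR_mat n :: complex mat) = of_nat (fib_fact n) * (\<Sum>k=1..n. of_int (moebius k) / of_nat (fib k))"
    using det_Em[OF assms(1)] by simp
  show ?thesis using 1 2 by simp
qed

end
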